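(* Let $d\ge2$, $b:=2^d$, $N\in\mathbb{N}$, $L:=\min\{\ell\ge0:b^\ell\ge N\}$, and assume $L\ge3$. Then \[ S_{L-2}\le\frac{2^{d-1}}{2^{d-1}-1}\,2^{-L}\le2\cdot2^{-L}. \]
   Context: For $0\le\ell\le L-3$: $\Delta_\ell:=\frac{2^{2d-3}}{N}2^{\ell(d-1)}$, $S_0:=0$, $S_{\ell+1}:=S_\ell+\Delta_\ell$; thus $S_{L-2}=\sum_{\ell=0}^{L-3}\Delta_\ell$. *)

theory Defs
  imports Complex_Main
begin

text \<open>Delta_l = 2^(2d-3)/N * 2^(l(d-1)), for d >= 2 (so 2d-3 is a genuine natural number).\<close>
definition Delta :: "nat \<Rightarrow> nat \<Rightarrow> nat \<Rightarrow> real" where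
  "Delta d N l = (2::real) ^ (2*d - 3) / real N * (2::real) ^ (l * (d - 1))"

fun S :: "nat \<Rightarrow> nat \<Rightarrow> nat \<Rightarrow> real" where
  "S d N 0 = 0"
| "S d N (Suc l) = S d N l + Delta d N l"

definition levelL :: "nat \<Rightarrow> nat \<Rightarrow> nat" where
  "levelL d N = (LEAST l. ((2::nat) ^ d) ^ l \<ge> N)"

end

theory Submission
  imports Defs
begin

lemma geo_step:
  fixes c q :: real
  assumes "q \<noteq> 1"
  shows "c * (q^m - 1) / (q - 1) + c * q^m = c * (q^Suc m - 1) / (q - 1)"
proof -
  have "q - 1 \<noteq> 0" using assms by simp
  thus ?thesis by (simp add: field_simps)
qed

lemma S_closed:
  assumes "d \<ge> 2"
  shows "S d N m = (2::real) ^ (2*d - 3) / real N * (((2::real)^(d-1))^m - 1) / ((2::real)^(d-1) - 1)"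
proof (induction m)
  case 0 then show ?case by simp
next
  case (Suc m)
  have q: "(2::real)^(d-1) \<ge> 2"
    using power_increasing[of 1 "d-1" "2::real"] assms by simp
  have pw: "(2::real) ^ (m * (d - 1)) = ((2::real)^(d-1))^m"
    by (metis power_mult mult.commute)
  have "q \<noteq> 1" if "q = (2::real)^(d-1)" for q using q that by simp
  show ?case unfolding S.simps Suc Delta_def pw
    using geo_step[of "(2::real)^(d-1)" "(2::real) ^ (2*d - 3) / real N" m] q by simp
qed

theorem lemma2p10:
  fixes d N :: nat
  assumes "d \<ge> 2" and "levelL d N \<ge> 3"
  shows "S d N (levelL d N - 2)
           \<le> (2::real) ^ (d - 1) / ((2::real) ^ (d - 1) - 1) * 2 powr (- real (levelL d N))
       \<and> (2::real) ^ (d - 1) / ((2::real) ^ (d - 1) - 1) * 2 powr (- real (levelL d N))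
           \<le> 2 * 2 powr (- real (levelL d N))"
proof -
  define L where "L = levelL d N"
  define M where "M = L - 2"
  define q where "q = (2::real)^(d-1)"
  have LM: "L = M + 2" using assms(2) unfolding L_def M_def by simp
  have "L-1 < (LEAST l. N \<le> ((2::nat)^d)^l)" using assms(2) unfolding L_def levelL_def by simp
  then have "\<not> ((2::nat)^d)^(L-1) \<ge> N" by (rule not_less_Least)
  hence Nb: "(2::nat)^(d*M + d) < N" using LM by (simp add: power_mult[symmetric] power_add algebra_simps)
  hence Nr: "(2::real)^(d*M + d) < real N"
    by (metis of_nat_less_iff of_nat_numeral of_nat_power)
  have Npos: "real N > 0" using Nr by (smt (verit) zero_less_power)
  have q2: "q \<ge> 2" unfolding q_def
    using power_increasing[of 1 "d-1" "2::real"] assms(1) by simp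
  have pL: "2 powr (- real L) = 1 / 2^L"
    by (simp add: powr_minus powr_realpow divide_inverse)
  have e1: "(2::real)^(2*d-3) * q^M * 2^L = 2^(d*M + d) * q"
  proof -
    have "(2::real)^(2*d-3) * q^M * 2^L = 2^(2*d-3 + (d-1)*M + L)"
      unfolding q_def by (simp add: power_add power_mult[symmetric] mult.commute)
    also have "2*d-3 + (d-1)*M + L = (d*M + d) + (d-1)" using assms(1) LM
      by (simp add: algebra_simps diff_mult_distrib2) (cases d; auto simp: algebra_simps)
    finally show ?thesis unfolding q_def by (simp add: power_add)
  qed
  have S: "S d N M = 2^(2*d-3) / real N * (q^M - 1) / (q - 1)"
    using S_closed[OF assms(1)] unfolding q_def by simp
  have "S d N M \<le> 2^(2*d-3) / real N * q^M / (q - 1)"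
    unfolding S using q2 Npos by (simp add: divide_right_mono)
  also have "\<dots> \<le> q / (q - 1) * (1 / 2^L)"
  proof -
    have "2^(2*d-3) * q^M * 2^L \<le> real N * q" using e1 Nr q2 by simp
    hence "2^(2*d-3) / real N * q^M \<le> q * (1/2^L)" using Npos
      by (simp add: field_simps)
    hence "2^(2*d-3) / real N * q^M / (q - 1) \<le> q * (1/2^L) / (q - 1)"
      using q2 by (intro divide_right_mono) auto
    thus ?thesis by (simp add: mult.commute)
  qed
  finally have A: "S d N M \<le> q / (q - 1) * 2 powr (- real L)" using pL by simp
  have B: "q / (q - 1) * 2 powr (- real L) \<le> 2 * 2 powr (- real L)"
    using q2 by (intro mult_right_mono) (simp_all add: field_simps)
  show ?thesis using A B unfolding M_def q_def L_def by simp
qed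

end
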